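(* Let the random permutation $\tau$ be uniformly distributed on the alternating group $A_N$, where $N\ge 3$. Then, as $N\to\infty$, $$\Pr[C_\tau\ge t] = O\left(\frac{N}{2^t}\right),$$ with the implied constant independent of $N$ and $t$.
   Context: For a permutation $\pi$ of $\{1,\ldots,N\}$, $C_\pi$ denotes the number of cycles of $\pi$. *)

theory Defs
  imports "HOL-Combinatorics.Combinatorics" "HOL-Probability.Probability"
begin

definition alt_perms :: "nat \<Rightarrow> (nat \<Rightarrow> nat) set" where
  "alt_perms N = {p. p permutes {1..N} \<and> evenperm p}"

text \<open>Number of cycles (fixed points count as cycles of length 1):
  the number of distinct orbits of p on {1..N}.\<close>
definition num_cycles :: "nat \<Rightarrow> (nat \<Rightarrow> nat) \<Rightarrow> nat" where
  "num_cycles N p = card (orbit p ` {1..N})"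

end

theory Submission
  imports Defs
begin

lemma orbit_eq_perm:
  assumes "permutation f" "y \<in> orbit f x"
  shows "orbit f y = orbit f x"
proof
  show "orbit f y \<subseteq> orbit f x" using assms(2) orbit_trans by fast
  have "x \<in> orbit f y" using orbit_swap[OF permutation_self_in_orbit[OF assms(1)] assms(2)] .
  then show "orbit f x \<subseteq> orbit f y" using orbit_trans by fast
qed

locale merge =
  fixes q :: "'a \<Rightarrow> 'a" and S a b
  assumes q: "q permutes S" and fS: "finite S" and aS: "a \<notin> S" and bS: "b \<in> S"
begin

definition "p = Transposition.transpose a b \<circ> q"

lemma qa: "q a = a" using q aS permutes_not_in by fast

lemma p_perm: "p permutes insert a S"
  unfolding p_def
  by (rule permutes_compose[OF permutes_subset[OF q] permutes_swap_id]) (use bS in auto)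

lemma perm_p: "permutation p"
  using p_perm fS permutation_permutes by blast

lemma perm_q: "permutation q"
  using q fS permutation_permutes by blast

lemma qinj: "q x = q y \<Longrightarrow> x = y"
  using q permutes_inj by (metis injD)

lemma orbq_S: "orbit q b \<subseteq> S" using permutes_orbit_subset[OF q bS] .

lemma a_notin: "a \<notin> orbit q b" using orbq_S aS by blast

lemma orbit_p_a: "orbit p a = insert a (orbit q b)"
proof
  show "orbit p a \<subseteq> insert a (orbit q b)"
  proof
    fix z assume "z \<in> orbit p a"
    then show "z \<in> insert a (orbit q b)"
    proof induct
      case base
      then show ?case using permutation_self_in_orbit[OF perm_q] by (simp add: p_def qa)
    next
      case (step y)
      show ?case
      proof (cases "y = a")
        case True
        then show ?thesis using permutation_self_in_orbit[OF perm_q] by (simp add: p_def qa)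
      next
        case False
        with step have y: "y \<in> orbit q b" by auto
        have qy: "q y \<in> orbit q b" using y orbit.step by fast
        have "q y \<noteq> a" using qa qinj False by metis
        then show ?thesis using qy by (auto simp: p_def Transposition.transpose_def)
      qed
    qed
  qed
next
  have aa: "a \<in> orbit p a" using permutation_self_in_orbit[OF perm_p] .
  have pa: "p a = b" by (simp add: p_def qa)
  have ba: "b \<in> orbit p a" using orbit.base[of p a] pa by simp
  have "z \<in> orbit p a" if "z \<in> orbit q b" for z
    using that
  proof induct
    case base
    show ?case
    proof (cases "q b = b")
      case True then show ?thesis using ba by simp
    next
      case False
      have "q b \<noteq> a" using qa qinj bS aS by metis
      then have "p b = q b" using False by (simp add: p_def Transposition.transpose_def)
      then show ?thesis using orbit.step[OF ba, of] by metis
    qed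
  next
    case (step y)
    show ?case
    proof (cases "q y = b")
      case True then show ?thesis using ba by simp
    next
      case False
      have "y \<noteq> a" using step(1) a_notin by blast
      then have "q y \<noteq> a" using qa qinj by metis
      then have "p y = q y" using False by (simp add: p_def Transposition.transpose_def)
      then show ?thesis using orbit.step[OF step(2)] by metis
    qed
  qed
  then show "insert a (orbit q b) \<subseteq> orbit p a" using aa by blast
qed

lemma orbit_p_other:
  assumes y: "y \<in> S" "y \<notin> orbit q b"
  shows "orbit p y = orbit q y"
proof (rule orbit_cong[OF permutation_self_in_orbit[OF perm_q]])
  fix z assume z: "z \<in> orbit q y"
  have zS: "z \<in> S" using z permutes_orbit_subset[OF q y(1)] by blast
  have "q z \<noteq> b"
  proof
    assume "q z = b"
    then have "b \<in> orbit q y" using orbit.step[OF z] by simp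
    then have "y \<in> orbit q b" using orbit_swap[OF permutation_self_in_orbit[OF perm_q]] by blast
    then show False using y by blast
  qed
  moreover have "q z \<noteq> a" using qa qinj zS aS by metis
  ultimately show "p z = q z" by (simp add: p_def Transposition.transpose_def)
qed

lemma card_le: "card (orbit p ` insert a S) \<le> card (orbit q ` S)"
proof -
  define g where "g Z = (if b \<in> Z then insert a Z else Z)" for Z
  have sub: "orbit p ` insert a S \<subseteq> g ` (orbit q ` S)"
  proof
    fix X assume "X \<in> orbit p ` insert a S"
    then obtain y where y: "y \<in> insert a S" "X = orbit p y" by blast
    have bb: "b \<in> orbit q b" using permutation_self_in_orbit[OF perm_q] .
    show "X \<in> g ` (orbit q ` S)"
    proof (cases "y = a \<or> y \<in> orbit q b")
      case True
      then have "y \<in> orbit p a" using orbit_p_a by blast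
      then have "X = orbit p a" using y orbit_eq_perm[OF perm_p] by blast
      then have "X = g (orbit q b)" using orbit_p_a bb by (simp add: g_def)
      then show ?thesis using bS by blast
    next
      case False
      then have yS: "y \<in> S" "y \<notin> orbit q b" using y by auto
      have "b \<notin> orbit q y"
      proof
        assume "b \<in> orbit q y"
        then have "y \<in> orbit q b" using orbit_swap[OF permutation_self_in_orbit[OF perm_q]] by blast
        then show False using yS by blast
      qed
      then have "X = g (orbit q y)" using y orbit_p_other[OF yS] by (simp add: g_def)
      then show ?thesis using yS by blast
    qed
  qed
  have "card (orbit p ` insert a S) \<le> card (g ` (orbit q ` S))"
    using sub fS by (intro card_mono) auto
  also have "\<dots> \<le> card (orbit q ` S)" using fS by (intro card_image_le) auto
  finally show ?thesis .
qed

end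

definition W :: "'a set \<Rightarrow> nat" where
  "W S = (\<Sum>p\<in>{p. p permutes S}. 2 ^ card (orbit p ` S))"

lemma W_insert:
  assumes fS: "finite S" and aS: "a \<notin> S"
  shows "W (insert a S) \<le> (card S + 2) * W S"
proof -
  let ?f = "\<lambda>p. (2::nat) ^ card (orbit p ` insert a S)"
  have "W (insert a S) = (\<Sum>b\<in>insert a S. \<Sum>q\<in>{p. p permutes S}. ?f (Transposition.transpose a b \<circ> q))"
    unfolding W_def by (rule sum_over_permutations_insert[OF fS aS])
  also have "\<dots> = (\<Sum>q\<in>{p. p permutes S}. ?f (Transposition.transpose a a \<circ> q))
      + (\<Sum>b\<in>S. \<Sum>q\<in>{p. p permutes S}. ?f (Transposition.transpose a b \<circ> q))"
    using fS aS by (simp add: sum.insert)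
  also have "\<dots> \<le> 2 * W S + (\<Sum>b\<in>S. W S)"
  proof (rule add_mono)
    have "(\<Sum>q\<in>{p. p permutes S}. ?f (Transposition.transpose a a \<circ> q))
        \<le> (\<Sum>q\<in>{p. p permutes S}. 2 * 2 ^ card (orbit q ` S))"
    proof (rule sum_mono)
      fix q assume "q \<in> {p. p permutes S}"
      have "card (orbit q ` insert a S) \<le> Suc (card (orbit q ` S))"
        using fS by (simp add: card_insert_le_m1 card_insert_if)
      then have "?f q \<le> 2 ^ Suc (card (orbit q ` S))" by (intro power_increasing) auto
      then show "?f (Transposition.transpose a a \<circ> q) \<le> 2 * 2 ^ card (orbit q ` S)" by simp
    qed
    then show "(\<Sum>q\<in>{p. p permutes S}. ?f (Transposition.transpose a a \<circ> q)) \<le> 2 * W S"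
      by (simp add: W_def sum_distrib_left)
    show "(\<Sum>b\<in>S. \<Sum>q\<in>{p. p permutes S}. ?f (Transposition.transpose a b \<circ> q)) \<le> (\<Sum>b\<in>S. W S)"
    proof (rule sum_mono)
      fix b assume bS: "b \<in> S"
      show "(\<Sum>q\<in>{p. p permutes S}. ?f (Transposition.transpose a b \<circ> q)) \<le> W S"
        unfolding W_def
      proof (rule sum_mono)
        fix q assume "q \<in> {p. p permutes S}"
        then interpret merge q S a b using fS aS bS by unfold_locales auto
        show "?f (Transposition.transpose a b \<circ> q) \<le> 2 ^ card (orbit q ` S)"
          using card_le unfolding p_def by (intro power_increasing) auto
      qed
    qed
  qed
  also have "\<dots> = (card S + 2) * W S" by simp
  finally show ?thesis .
qed

lemma W_bound: "finite S \<Longrightarrow> W S \<le> fact (card S + 1)"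
proof (induction S rule: finite_induct)
  case empty
  have "{p. p permutes {}} = {id}" by (auto simp: permutes_empty)
  then show ?case by (simp add: W_def)
next
  case (insert a S)
  have "W (insert a S) \<le> (card S + 2) * W S" by (rule W_insert[OF insert(1,2)])
  also have "\<dots> \<le> (card S + 2) * fact (card S + 1)" using insert(3) by (intro mult_left_mono) auto
  also have "\<dots> = fact (Suc (card S + 1))" by (simp only: fact_Suc) simp
  also have "\<dots> = fact (card (insert a S) + 1)" using insert(1,2) by simp
  finally show ?case .
qed

lemma card_alt:
  assumes N: "N \<ge> 2"
  shows "fact N \<le> 2 * card (alt_perms N)"
proof -
  define P where "P = {p. p permutes {1..N::nat}}"
  define A where "A = alt_perms N"
  define Od where "Od = P - A"
  have finP: "finite P" unfolding P_def by (rule finite_permutations) simp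
  have AP: "A \<subseteq> P" unfolding A_def P_def alt_perms_def by auto
  have cardP: "card P = fact N" unfolding P_def by (rule card_permutations) auto
  define h where "h p = Transposition.transpose (1::nat) 2 \<circ> p" for p :: "nat \<Rightarrow> nat"
  have tp: "Transposition.transpose (1::nat) 2 permutes {1..N}"
    using N by (intro permutes_swap_id) auto
  have hOd: "h ` Od \<subseteq> A"
  proof
    fix x assume "x \<in> h ` Od"
    then obtain p where p: "p \<in> Od" "x = h p" by blast
    have pp: "p permutes {1..N}" "\<not> evenperm p"
      using p(1) unfolding Od_def P_def A_def alt_perms_def by auto
    have perm: "permutation p" using pp(1) permutation_permutes by blast
    have permt: "permutation (Transposition.transpose (1::nat) 2)" using tp permutation_permutes by blast
    have "evenperm (h p)" unfolding h_def using evenperm_comp[OF permt perm] evenperm_swap[of "1::nat" 2] pp(2) by simp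
    moreover have "h p permutes {1..N}" unfolding h_def by (rule permutes_compose[OF pp(1) tp])
    ultimately show "x \<in> A" using p unfolding A_def alt_perms_def by simp
  qed
  have "inj_on h Od"
  proof (rule inj_onI)
    fix x y assume "h x = h y"
    then have "Transposition.transpose (1::nat) 2 \<circ> h x = Transposition.transpose 1 2 \<circ> h y" by simp
    then show "x = y" unfolding h_def by (simp add: comp_assoc[symmetric])
  qed
  then have "card Od \<le> card A"
    using card_inj_on_le[OF _ hOd] finite_subset[OF AP finP] by blast
  moreover have "card P = card A + card Od"
    unfolding Od_def using AP finP by (metis card_Diff_subset finite_subset card_mono le_add_diff_inverse)
  ultimately show ?thesis using cardP A_def by simp
qed

theorem theorem2p2:
  "\<exists>K::real. \<forall>N::nat. \<forall>t::nat. N \<ge> 3 \<longrightarrow>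
     measure_pmf.prob (pmf_of_set (alt_perms N)) {\<tau>. num_cycles N \<tau> \<ge> t}
       \<le> K * real N / 2 ^ t"
proof (intro exI allI impI)
  fix N t :: nat assume N: "N \<ge> 3"
  define P where "P = {p. p permutes {1..N::nat}}"
  define A where "A = alt_perms N"
  define E where "E = {\<tau>. num_cycles N \<tau> \<ge> t}"
  have finP: "finite P" unfolding P_def by (rule finite_permutations) simp
  have AP: "A \<subseteq> P" unfolding A_def P_def alt_perms_def by auto
  have finA: "finite A" using finite_subset[OF AP finP] .
  have neA: "A \<noteq> {}" unfolding A_def alt_perms_def using permutes_id evenperm_id by blast
  have cA: "fact N \<le> 2 * card A" unfolding A_def using card_alt N by simp
  have "card (A \<inter> E) \<le> card (P \<inter> E)" using AP finP by (intro card_mono) auto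
  have m1: "card (P \<inter> E) * 2 ^ t \<le> W {1..N}"
  proof -
    have "card (P \<inter> E) * 2 ^ t = (\<Sum>p\<in>P \<inter> E. (2::nat) ^ t)" by simp
    also have "\<dots> \<le> (\<Sum>p\<in>P \<inter> E. 2 ^ card (orbit p ` {1..N}))"
      by (intro sum_mono power_increasing) (auto simp: E_def num_cycles_def)
    also have "\<dots> \<le> (\<Sum>p\<in>P. 2 ^ card (orbit p ` {1..N}))"
      using finP by (intro sum_mono2) auto
    also have "\<dots> = W {1..N}" unfolding W_def P_def ..
    finally show ?thesis .
  qed
  have "W {1..N} \<le> fact (N + 1)" using W_bound[of "{1..N}"] by simp
  also have "\<dots> = (N + 1) * fact N" by simp
  also have "\<dots> \<le> (N + 1) * (2 * card A)" using cA by (intro mult_left_mono) auto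
  also have "\<dots> \<le> 4 * N * card A" using N by (simp add: algebra_simps)
  finally have key: "card (A \<inter> E) * 2 ^ t \<le> 4 * N * card A"
    using m1 \<open>card (A \<inter> E) \<le> card (P \<inter> E)\<close>
    by (meson le_trans mult_le_mono1)
  have cpos: "card A > 0" using finA neA by (simp add: card_gt_0_iff)
  have "measure_pmf.prob (pmf_of_set A) E = card (A \<inter> E) / card A"
    by (rule measure_pmf_of_set[OF neA finA])
  also have "\<dots> \<le> 4 * real N / 2 ^ t"
  proof -
    have "real (card (A \<inter> E)) * 2 ^ t \<le> 4 * real N * real (card A)"
      using key by (metis (mono_tags, lifting) of_nat_le_iff of_nat_mult of_nat_numeral of_nat_power)
    then show ?thesis using cpos by (simp add: divide_simps mult.commute mult.left_commute)
  qed
  finally show "measure_pmf.prob (pmf_of_set (alt_perms N)) {\<tau>. num_cycles N \<tau> \<ge> t}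
       \<le> 4 * real N / 2 ^ t" unfolding A_def E_def .
qed

end
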